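(* Let $(X,e,\mu)$ be an $\mathrm{NP}_2$-digital H-space. Then $X_e$, the connected component of $X$ containing $e$, is $\mathrm{NP}_2$-contractible.
   Context: A digital image is a finite set $X\subset\mathbb{Z}^n$ with a reflexive symmetric adjacency relation (a finite reflexive graph); continuous maps send adjacent points to adjacent points. On products, $\mathrm{NP}_2$ declares two tuples adjacent iff coordinates are adjacent in at most 2 positions and equal elsewhere. An $\mathrm{NP}_2$-homotopy from $f$ to $g:X\to Y$ is an $\mathrm{NP}_2$-continuous $H:X\times[0,m]_{\mathbb{Z}}\to Y$ with $H(\cdot,0)=f$, $H(\cdot,m)=g$; write $f\simeq_2 g$. A digital image is $\mathrm{NP}_2$-contractible if it is $\mathrm{NP}_2$-homotopy equivalent to a single point (equivalently its identity is $\mathrm{NP}_2$-homotopic to a constant map). $(f,g)(x)=(f(x),g(x))$; $c_e$ is constant at $e$. An $\mathrm{NP}_2$-digital H-space is $(X,e,\mu)$ with $\mu:X\times X\to X$ $\mathrm{NP}_2$-continuous, $\mu\circ(\mathrm{id}_X,c_e)\simeq_2\mathrm{id}_X$, $\mu\circ(c_e,\mathrm{id}_X)\simeq_2\mathrm{id}_X$ (homotopies need not be pointed). *)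

theory Defs
  imports "HOL-Analysis.Analysis"
begin

definition digital_image :: "'a set \<Rightarrow> ('a \<Rightarrow> 'a \<Rightarrow> bool) \<Rightarrow> bool" where
  "digital_image X adj \<longleftrightarrow> finite X \<and> (\<forall>x\<in>X. adj x x)
     \<and> (\<forall>x\<in>X. \<forall>y\<in>X. adj x y \<longrightarrow> adj y x)"

definition dcont :: "'a set \<Rightarrow> ('a \<Rightarrow> 'a \<Rightarrow> bool) \<Rightarrow> 'b set \<Rightarrow> ('b \<Rightarrow> 'b \<Rightarrow> bool)
    \<Rightarrow> ('a \<Rightarrow> 'b) \<Rightarrow> bool" where
  "dcont X adjX Y adjY f \<longleftrightarrow> (\<forall>x\<in>X. f x \<in> Y)
     \<and> (\<forall>x\<in>X. \<forall>x'\<in>X. adjX x x' \<longrightarrow> adjY (f x) (f x'))"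

text \<open>NP_2 adjacency on a product of two digital images: the tuples are adjacent iff
  coordinates are adjacent in at most 2 positions and equal elsewhere; with two factors
  this says each coordinate is equal or adjacent.\<close>
definition np2_adj :: "('a \<Rightarrow> 'a \<Rightarrow> bool) \<Rightarrow> ('b \<Rightarrow> 'b \<Rightarrow> bool)
    \<Rightarrow> 'a \<times> 'b \<Rightarrow> 'a \<times> 'b \<Rightarrow> bool" where
  "np2_adj adj1 adj2 p q \<longleftrightarrow>
     (fst p = fst q \<or> adj1 (fst p) (fst q)) \<and> (snd p = snd q \<or> adj2 (snd p) (snd q))"

definition int_adj :: "int \<Rightarrow> int \<Rightarrow> bool" where
  "int_adj s t \<longleftrightarrow> \<bar>s - t\<bar> \<le> 1"

definition np2_homotopic :: "'a set \<Rightarrow> ('a \<Rightarrow> 'a \<Rightarrow> bool) \<Rightarrow> 'b set \<Rightarrow> ('b \<Rightarrow> 'b \<Rightarrow> bool)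
    \<Rightarrow> ('a \<Rightarrow> 'b) \<Rightarrow> ('a \<Rightarrow> 'b) \<Rightarrow> bool" where
  "np2_homotopic X adjX Y adjY f g \<longleftrightarrow>
     (\<exists>(m::int) H. 0 \<le> m
        \<and> dcont (X \<times> {0..m}) (np2_adj adjX int_adj) Y adjY H
        \<and> (\<forall>x\<in>X. H (x, 0) = f x) \<and> (\<forall>x\<in>X. H (x, m) = g x))"

definition np2_H_space :: "'a set \<Rightarrow> ('a \<Rightarrow> 'a \<Rightarrow> bool) \<Rightarrow> 'a \<Rightarrow> ('a \<times> 'a \<Rightarrow> 'a) \<Rightarrow> bool" where
  "np2_H_space X adj e \<mu> \<longleftrightarrow> digital_image X adj \<and> e \<in> X
     \<and> dcont (X \<times> X) (np2_adj adj adj) X adj \<mu>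
     \<and> np2_homotopic X adj X adj (\<lambda>x. \<mu> (x, e)) id
     \<and> np2_homotopic X adj X adj (\<lambda>x. \<mu> (e, x)) id"

definition component :: "'a set \<Rightarrow> ('a \<Rightarrow> 'a \<Rightarrow> bool) \<Rightarrow> 'a \<Rightarrow> 'a set" where
  "component X adj e = {y \<in> X. (\<lambda>a b. a \<in> X \<and> b \<in> X \<and> adj a b)\<^sup>*\<^sup>* e y}"

definition np2_contractible :: "'a set \<Rightarrow> ('a \<Rightarrow> 'a \<Rightarrow> bool) \<Rightarrow> bool" where
  "np2_contractible X adj \<longleftrightarrow> (\<exists>p\<in>X. np2_homotopic X adj X adj id (\<lambda>_. p))"

end

theory Submission
  imports Defs
begin

definition cnt :: "'a set \<Rightarrow> ('a \<Rightarrow> 'a \<Rightarrow> bool) \<Rightarrow> ('a \<Rightarrow> 'a) \<Rightarrow> bool" where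
  "cnt C adj f \<longleftrightarrow> (\<forall>x\<in>C. f x \<in> C) \<and> (\<forall>x\<in>C. \<forall>x'\<in>C. adj x x' \<longrightarrow> adj (f x) (f x'))"
definition sadj :: "'a set \<Rightarrow> ('a \<Rightarrow> 'a \<Rightarrow> bool) \<Rightarrow> ('a \<Rightarrow> 'a) \<Rightarrow> ('a \<Rightarrow> 'a) \<Rightarrow> bool" where
  "sadj C adj f g \<longleftrightarrow> (\<forall>x\<in>C. \<forall>x'\<in>C. adj x x' \<longrightarrow> adj (f x) (g x'))"
definition stp :: "'a set \<Rightarrow> ('a \<Rightarrow> 'a \<Rightarrow> bool) \<Rightarrow> ('a \<Rightarrow> 'a) \<Rightarrow> ('a \<Rightarrow> 'a) \<Rightarrow> bool" where
  "stp C adj f g \<longleftrightarrow> cnt C adj f \<and> cnt C adj g \<and> sadj C adj f g"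

abbreviation hrel where "hrel C adj \<equiv> (stp C adj)\<^sup>*\<^sup>*"

lemma pow_img: "\<psi> ` R \<subseteq> R \<Longrightarrow> (\<psi>^^i) ` R \<subseteq> R"
  by (induction i) auto

lemma perm_pow:
  assumes fin: "finite R" and im: "\<psi> ` R = R" and inj: "inj_on \<psi> R"
  shows "\<exists>n>0. \<forall>x\<in>R. (\<psi>^^n) x = x"
proof -
  have ij: "inj_on (\<psi>^^i) R \<and> (\<psi>^^i) ` R = R" for i
  proof (induction i)
    case 0 then show ?case by simp
  next
    case (Suc i)
    have a: "inj_on (\<psi> \<circ> \<psi>^^i) R"
      by (rule comp_inj_on) (use Suc inj im in auto)
    have b: "(\<psi> \<circ> \<psi>^^i) ` R = R"
      using Suc im by (metis image_comp)
    show ?case using a b by (simp add: comp_def)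
  qed
  define G where "G i = restrict (\<psi>^^i) R" for i
  have GP: "G i \<in> R \<rightarrow>\<^sub>E R" for i
    using ij[of i] by (auto simp: G_def)
  have finP: "finite (R \<rightarrow>\<^sub>E R)" using fin by (intro finite_PiE) auto
  have "\<not> inj G"
  proof
    assume "inj G"
    moreover have "finite (G ` UNIV)" using GP finP by (meson finite_subset image_subsetI)
    ultimately have "finite (UNIV :: nat set)" using finite_imageD by blast
    then show False by simp
  qed
  then obtain i j where ij0: "i \<noteq> j" "G i = G j" unfolding inj_def by blast
  obtain i j where ij1: "i < j" "G i = G j"
    using ij0 by (metis linorder_neq_iff)
  have "\<forall>x\<in>R. (\<psi>^^(j-i)) x = x"
  proof
    fix x assume x: "x \<in> R"
    have "(\<psi>^^j) x = (\<psi>^^i) x" using fun_cong[OF ij1(2), of x] x by (simp add: G_def)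
    moreover have "(\<psi>^^j) x = (\<psi>^^i) ((\<psi>^^(j-i)) x)"
      using ij1(1) funpow_add[of i "j-i" \<psi>] by simp
    moreover have "(\<psi>^^(j-i)) x \<in> R" using ij[of "j-i"] x by blast
    ultimately show "(\<psi>^^(j-i)) x = x" using ij[of i] x by (metis inj_onD)
  qed
  then show ?thesis using ij1(1) by (intro exI[of _ "j-i"]) auto
qed

locale gr =
  fixes C :: "'a set" and adj :: "'a \<Rightarrow> 'a \<Rightarrow> bool"
  assumes rfl: "\<And>x. x \<in> C \<Longrightarrow> adj x x"
    and sym: "\<And>x y. x \<in> C \<Longrightarrow> y \<in> C \<Longrightarrow> adj x y \<Longrightarrow> adj y x"
begin

lemma hrel_cnt: "hrel C adj f g \<Longrightarrow> cnt C adj f \<Longrightarrow> cnt C adj g"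
  by (induction rule: rtranclp_induct) (auto simp: stp_def)

lemma stp_sym: assumes "stp C adj f g" shows "stp C adj g f"
proof -
  have c: "cnt C adj f" "cnt C adj g" and s: "sadj C adj f g" using assms by (auto simp: stp_def)
  have "adj (g x) (f x')" if "x \<in> C" "x' \<in> C" "adj x x'" for x x'
  proof -
    have "adj x' x" using sym that by blast
    then have "adj (f x') (g x)" using s that unfolding sadj_def by blast
    moreover have "f x' \<in> C" "g x \<in> C" using c that unfolding cnt_def by auto
    ultimately show ?thesis using sym by blast
  qed
  then show ?thesis using c by (auto simp: stp_def sadj_def)
qed

lemma hrel_sym: "hrel C adj f g \<Longrightarrow> hrel C adj g f"
  by (induction rule: rtranclp_induct) (auto intro: converse_rtranclp_into_rtranclp stp_sym)

lemma eq_stp: assumes "cnt C adj a" "\<And>x. x \<in> C \<Longrightarrow> a x = b x" shows "stp C adj a b"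
proof -
  have e: "\<And>x. x \<in> C \<Longrightarrow> b x = a x" using assms(2) by simp
  show ?thesis using assms(1) unfolding stp_def sadj_def cnt_def by (simp add: e)
qed

lemma stp_refl: "cnt C adj a \<Longrightarrow> stp C adj a a"
  by (rule eq_stp) auto

lemma cnt_id: "cnt C adj id"
  by (simp add: cnt_def)

lemma cnt_const: "y \<in> C \<Longrightarrow> cnt C adj (\<lambda>_. y)"
  by (simp add: cnt_def rfl)

lemma cnt_comp: "cnt C adj f \<Longrightarrow> cnt C adj g \<Longrightarrow> cnt C adj (f \<circ> g)"
  by (simp add: cnt_def)

lemma cnt_pow: "cnt C adj f \<Longrightarrow> cnt C adj (f^^i)"
  by (induction i) (auto simp: cnt_id cnt_comp)

lemma comp_stp: "stp C adj f f' \<Longrightarrow> stp C adj g g' \<Longrightarrow> stp C adj (\<lambda>x. f (g x)) (\<lambda>x. f' (g' x))"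
  unfolding stp_def sadj_def cnt_def by auto

lemma comp_l:
  assumes "hrel C adj f f'" "cnt C adj g"
  shows "hrel C adj (\<lambda>x. f (g x)) (\<lambda>x. f' (g x))"
  using assms(1)
proof (induction rule: rtranclp_induct)
  case base then show ?case by simp
next
  case (step b c)
  have "stp C adj (\<lambda>x. b (g x)) (\<lambda>x. c (g x))"
    by (rule comp_stp[OF step.hyps(2) stp_refl[OF assms(2)]])
  then show ?case by (rule rtranclp.rtrancl_into_rtrancl[OF step.IH])
qed

lemma comp_r:
  assumes "hrel C adj g g'" "cnt C adj f"
  shows "hrel C adj (\<lambda>x. f (g x)) (\<lambda>x. f (g' x))"
  using assms(1)
proof (induction rule: rtranclp_induct)
  case base then show ?case by simp
next
  case (step b c)
  have "stp C adj (\<lambda>x. f (b x)) (\<lambda>x. f (c x))"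
    by (rule comp_stp[OF stp_refl[OF assms(2)] step.hyps(2)])
  then show ?case by (rule rtranclp.rtrancl_into_rtrancl[OF step.IH])
qed

lemma comp_hrel:
  assumes "hrel C adj f f'" "cnt C adj f" "hrel C adj g g'" "cnt C adj g"
  shows "hrel C adj (\<lambda>x. f (g x)) (\<lambda>x. f' (g' x))"
proof -
  have "cnt C adj f'" using hrel_cnt assms by blast
  then show ?thesis using comp_l[OF assms(1,4)] comp_r[OF assms(3)]
    by (meson rtranclp_trans)
qed

end


locale hsp = gr C adj for C :: "'a set" and adj +
  fixes e :: 'a and mu :: "'a \<times> 'a \<Rightarrow> 'a"
  assumes fin: "finite C" and eC: "e \<in> C"
    and conn: "\<And>y. y \<in> C \<Longrightarrow> (\<lambda>a b. a \<in> C \<and> b \<in> C \<and> adj a b)\<^sup>*\<^sup>* e y"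
    and muC: "\<And>x y. x \<in> C \<Longrightarrow> y \<in> C \<Longrightarrow> mu (x, y) \<in> C"
    and muc: "\<And>x x' y y'. x \<in> C \<Longrightarrow> x' \<in> C \<Longrightarrow> y \<in> C \<Longrightarrow> y' \<in> C \<Longrightarrow>
        adj x x' \<Longrightarrow> adj y y' \<Longrightarrow> adj (mu (x, y)) (mu (x', y'))"
    and hl: "hrel C adj (\<lambda>x. mu (x, e)) id"
    and hr: "hrel C adj (\<lambda>x. mu (e, x)) id"
begin

lemma const_hrel: assumes "y \<in> C" shows "hrel C adj (\<lambda>_. e) (\<lambda>_. y)"
  using conn[OF assms]
proof (induction rule: rtranclp_induct)
  case base then show ?case by simp
next
  case (step a b)
  have "stp C adj (\<lambda>_. a) (\<lambda>_. b)"
    using step.hyps(2) by (auto simp: stp_def sadj_def cnt_const)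
  then show ?case by (rule rtranclp.rtrancl_into_rtrancl[OF step.IH])
qed

lemma pair_stp: "stp C adj a a' \<Longrightarrow> stp C adj b b' \<Longrightarrow>
   stp C adj (\<lambda>x. mu (a x, b x)) (\<lambda>x. mu (a' x, b' x))"
  unfolding stp_def sadj_def cnt_def by (auto intro!: muC muc)

lemma pair_r:
  assumes "hrel C adj b b'" "cnt C adj a"
  shows "hrel C adj (\<lambda>x. mu (a x, b x)) (\<lambda>x. mu (a x, b' x))"
  using assms(1)
proof (induction rule: rtranclp_induct)
  case base then show ?case by simp
next
  case (step c d)
  have "stp C adj (\<lambda>x. mu (a x, c x)) (\<lambda>x. mu (a x, d x))"
    by (rule pair_stp[OF stp_refl[OF assms(2)] step.hyps(2)])
  then show ?case by (rule rtranclp.rtrancl_into_rtrancl[OF step.IH])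
qed

lemma pair_l:
  assumes "hrel C adj a a'" "cnt C adj b"
  shows "hrel C adj (\<lambda>x. mu (a x, b x)) (\<lambda>x. mu (a' x, b x))"
  using assms(1)
proof (induction rule: rtranclp_induct)
  case base then show ?case by simp
next
  case (step c d)
  have "stp C adj (\<lambda>x. mu (c x, b x)) (\<lambda>x. mu (d x, b x))"
    by (rule pair_stp[OF step.hyps(2) stp_refl[OF assms(2)]])
  then show ?case by (rule rtranclp.rtrancl_into_rtrancl[OF step.IH])
qed

lemma mu_right: assumes "y \<in> C" shows "hrel C adj id (\<lambda>x. mu (x, y))"
proof -
  have "hrel C adj (\<lambda>x. mu (id x, (\<lambda>_. e) x)) (\<lambda>x. mu (id x, (\<lambda>_. y) x))"
    by (rule pair_r[OF const_hrel[OF assms] cnt_id])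
  then have a: "hrel C adj (\<lambda>x. mu (x, e)) (\<lambda>x. mu (x, y))" by simp
  have "hrel C adj id (\<lambda>x. mu (x, e))" by (rule hrel_sym[OF hl])
  then show ?thesis using a by (rule rtranclp_trans)
qed

lemma mu_left: assumes "y \<in> C" shows "hrel C adj id (\<lambda>x. mu (y, x))"
proof -
  have "hrel C adj (\<lambda>x. mu ((\<lambda>_. e) x, id x)) (\<lambda>x. mu ((\<lambda>_. y) x, id x))"
    by (rule pair_l[OF const_hrel[OF assms] cnt_id])
  then have a: "hrel C adj (\<lambda>x. mu (e, x)) (\<lambda>x. mu (y, x))" by simp
  have "hrel C adj id (\<lambda>x. mu (e, x))" by (rule hrel_sym[OF hr])
  then show ?thesis using a by (rule rtranclp_trans)
qed

end

locale hmin = hsp +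
  fixes f :: "'a \<Rightarrow> 'a"
  assumes fS: "hrel C adj id f"
    and fmin: "\<And>h. hrel C adj id h \<Longrightarrow> card (f ` C) \<le> card (h ` C)"
begin

lemma cf: "cnt C adj f" using hrel_cnt[OF fS cnt_id] .

lemma RC: "f ` C \<subseteq> C" using cf by (auto simp: cnt_def)

lemma finR: "finite (f ` C)" using fin by simp

lemma idid: "(\<lambda>x. id (id x)) = id" by (rule ext) simp

lemma Sc:
  assumes S: "hrel C adj id \<phi>" and sub: "\<phi> ` C \<subseteq> f ` C"
  shows "\<phi> ` (f ` C) = f ` C \<and> inj_on \<phi> (f ` C)"
proof -
  have "hrel C adj (\<lambda>x. id (id x)) (\<lambda>x. \<phi> (f x))"
    by (rule comp_hrel[OF S cnt_id fS cnt_id])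
  then have "hrel C adj id (\<lambda>x. \<phi> (f x))" by (simp only: idid)
  then have c1: "card (f ` C) \<le> card (\<phi> ` (f ` C))"
    using fmin by (simp add: image_image)
  have s2: "\<phi> ` (f ` C) \<subseteq> f ` C" using sub RC by blast
  have eq: "\<phi> ` (f ` C) = f ` C"
    using card_subset_eq[OF finR s2] c1 card_mono[OF finR s2] by linarith
  moreover have "inj_on \<phi> (f ` C)"
    by (rule eq_card_imp_inj_on[OF finR]) (simp add: eq)
  ultimately show ?thesis by blast
qed

lemma stiff:
  assumes u: "u \<in> f ` C" and v: "v \<in> f ` C" and dom: "\<And>w. w \<in> f ` C \<Longrightarrow> adj u w \<Longrightarrow> adj v w"
  shows "u = v"
proof (rule ccontr)
  assume uv: "u \<noteq> v"
  define h where "h w = (if f w = u then v else f w)" for w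
  have fx: "\<And>x. x \<in> C \<Longrightarrow> f x \<in> C" using cf by (auto simp: cnt_def)
  have fa: "\<And>x x'. x \<in> C \<Longrightarrow> x' \<in> C \<Longrightarrow> adj x x' \<Longrightarrow> adj (f x) (f x')"
    using cf by (auto simp: cnt_def)
  have vC: "v \<in> C" using v RC by blast
  have key: "adj (f x) (h x')" if xs: "x \<in> C" "x' \<in> C" "adj x x'" for x x'
  proof (cases "f x' = u")
    case True
    then have "adj (f x) u" using fa[OF xs] by simp
    then have "adj u (f x)" using sym fx xs True by metis
    then have "adj v (f x)" using dom xs by blast
    then show ?thesis using sym fx xs vC True by (simp add: h_def)
  next
    case False then show ?thesis using fa[OF xs] by (simp add: h_def)
  qed
  have hC: "\<And>x. x \<in> C \<Longrightarrow> h x \<in> C" using fx vC by (simp add: h_def)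
  have ha: "adj (h x) (h x')" if xs: "x \<in> C" "x' \<in> C" "adj x x'" for x x'
  proof (cases "f x = u")
    case True
    show ?thesis
    proof (cases "f x' = u")
      case True2: True
      then show ?thesis using True rfl vC by (simp add: h_def)
    next
      case False
      have "adj u (f x')" using fa[OF xs] True by simp
      then have "adj v (f x')" using dom xs by blast
      then show ?thesis using True False by (simp add: h_def)
    qed
  next
    case False then show ?thesis using key[OF xs] by (simp add: h_def)
  qed
  have "stp C adj f h" using cf hC ha key by (auto simp: stp_def sadj_def cnt_def)
  then have hS: "hrel C adj id h" by (rule rtranclp.rtrancl_into_rtrancl[OF fS])
  have sub: "h ` C \<subseteq> f ` C - {u}" using uv v by (auto simp: h_def)
  have "card (h ` C) \<le> card (f ` C - {u})" by (rule card_mono) (use finR sub in auto)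
  also have "\<dots> < card (f ` C)" using finR u by (meson card_Diff1_less)
  finally show False using fmin[OF hS] by linarith
qed

lemma agree:
  assumes c\<psi>: "cnt C adj \<psi>" and im: "\<psi> ` (f ` C) = f ` C" and inj: "inj_on \<psi> (f ` C)"
    and sub: "\<phi> ` (f ` C) \<subseteq> f ` C"
    and ad: "\<And>x x'. x \<in> f ` C \<Longrightarrow> x' \<in> f ` C \<Longrightarrow> adj x x' \<Longrightarrow> adj (\<phi> x) (\<psi> x')"
    and x: "x \<in> f ` C"
  shows "\<phi> x = \<psi> x"
proof -
  obtain n where n: "n > 0" "\<forall>y\<in>f ` C. (\<psi>^^n) y = y"
    using perm_pow[OF finR im inj] by blast
  define \<sigma> where "\<sigma> = \<psi>^^(n-1)"
  have sc: "cnt C adj \<sigma>" unfolding \<sigma>_def by (rule cnt_pow[OF c\<psi>])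
  have sR: "\<sigma> ` (f ` C) \<subseteq> f ` C" unfolding \<sigma>_def by (rule pow_img) (use im in auto)
  have sps: "\<sigma> (\<psi> y) = y" if "y \<in> f ` C" for y
  proof -
    have "\<sigma> (\<psi> y) = (\<psi>^^Suc (n-1)) y" unfolding \<sigma>_def funpow_Suc_right by simp
    also have "\<dots> = (\<psi>^^n) y" using n(1) by simp
    finally show ?thesis using n(2) that by simp
  qed
  have pss: "\<psi> (\<sigma> y) = y" if "y \<in> f ` C" for y
  proof -
    have "\<psi> (\<sigma> y) = (\<psi>^^Suc (n-1)) y" unfolding \<sigma>_def by simp
    also have "\<dots> = (\<psi>^^n) y" using n(1) by simp
    finally show ?thesis using n(2) that by simp
  qed
  have px: "\<phi> x \<in> f ` C" using sub x by blast
  have v: "\<sigma> (\<phi> x) \<in> f ` C" using sR px by blast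
  have "x = \<sigma> (\<phi> x)"
  proof (rule stiff[OF x v])
    fix w assume w: "w \<in> f ` C" "adj x w"
    have a: "adj (\<phi> x) (\<psi> w)" using ad[OF x w(1) w(2)] .
    have "\<psi> w \<in> f ` C" using im w(1) by blast
    then have "adj (\<sigma> (\<phi> x)) (\<sigma> (\<psi> w))"
      using sc a px RC unfolding cnt_def by blast
    then show "adj (\<sigma> (\<phi> x)) w" using sps[OF w(1)] by simp
  qed
  then have "\<psi> x = \<psi> (\<sigma> (\<phi> x))" by simp
  also have "\<dots> = \<phi> x" using pss[OF px] .
  finally show ?thesis by simp
qed

lemma result: "\<exists>p\<in>C. hrel C adj id (\<lambda>_. p)"
proof -
  define e' where "e' = f e"
  have e'R: "e' \<in> f ` C" using eC by (simp add: e'_def)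
  have e'C: "e' \<in> C" using e'R RC by blast
  have fx: "\<And>x. x \<in> C \<Longrightarrow> f x \<in> C" using cf by (auto simp: cnt_def)
  have fa: "\<And>x x'. x \<in> C \<Longrightarrow> x' \<in> C \<Longrightarrow> adj x x' \<Longrightarrow> adj (f x) (f x')"
    using cf by (auto simp: cnt_def)
  have Sphi: "hrel C adj id (\<lambda>x. f (mu (x, y)))" if "y \<in> C" for y
  proof -
    have "hrel C adj (\<lambda>x. id (id x)) (\<lambda>x. f (mu (x, y)))"
      by (rule comp_hrel[OF fS cnt_id mu_right[OF that] cnt_id])
    then show ?thesis by (simp only: idid)
  qed
  have Schi: "hrel C adj id (\<lambda>x. f (mu (y, x)))" if "y \<in> C" for y
  proof -
    have "hrel C adj (\<lambda>x. id (id x)) (\<lambda>x. f (mu (y, x)))"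
      by (rule comp_hrel[OF fS cnt_id mu_left[OF that] cnt_id])
    then show ?thesis by (simp only: idid)
  qed
  have imsub1: "(\<lambda>x. f (mu (x, e'))) ` C \<subseteq> f ` C" using muC e'C by blast
  have imsub2: "(\<lambda>x. f (mu (e', x))) ` C \<subseteq> f ` C" using muC e'C by blast
  have phi: "(\<lambda>x. f (mu (x, e'))) ` (f ` C) = f ` C \<and> inj_on (\<lambda>x. f (mu (x, e'))) (f ` C)"
    by (rule Sc[OF Sphi[OF e'C] imsub1])
  have chi: "(\<lambda>x. f (mu (e', x))) ` (f ` C) = f ` C \<and> inj_on (\<lambda>x. f (mu (e', x))) (f ` C)"
    by (rule Sc[OF Schi[OF e'C] imsub2])
  have cchi: "cnt C adj (\<lambda>x. f (mu (e', x)))" by (rule hrel_cnt[OF Schi[OF e'C] cnt_id])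
  have nb: "x = e'" if x: "x \<in> f ` C" "adj e' x" for x
  proof -
    have xC: "x \<in> C" using x RC by blast
    have "f (mu (x, e')) = f (mu (e', e'))"
    proof (rule agree[OF cchi conjunct1[OF chi] conjunct2[OF chi]])
      show "(\<lambda>y. f (mu (x, y))) ` f ` C \<subseteq> f ` C" using muC xC RC by blast
      show "e' \<in> f ` C" by (rule e'R)
    next
      fix y y' assume y: "y \<in> f ` C" "y' \<in> f ` C" "adj y y'"
      have yC: "y \<in> C" "y' \<in> C" using y RC by auto
      have "adj x e'" using sym[OF e'C xC x(2)] .
      then have "adj (mu (x, y)) (mu (e', y'))" using muc xC e'C yC y(3) by blast
      then show "adj (f (mu (x, y))) (f (mu (e', y')))" using fa muC xC e'C yC by blast
    qed
    then show ?thesis using conjunct2[OF phi] x(1) e'R by (auto dest: inj_onD)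
  qed
  have allc: "f c = e'" if "c \<in> C" for c
    using conn[OF that]
  proof (induction rule: rtranclp_induct)
    case base then show ?case by (simp add: e'_def)
  next
    case (step a b)
    then have "adj e' (f b)" using fa by metis
    then show ?case using nb step.hyps(2) by blast
  qed
  have "stp C adj f (\<lambda>_. e')" by (rule eq_stp[OF cf]) (simp add: allc)
  then have "hrel C adj id (\<lambda>_. e')" by (rule rtranclp.rtrancl_into_rtrancl[OF fS])
  then show ?thesis using e'C by blast
qed

end

lemma (in hsp) contractible: "\<exists>p\<in>C. hrel C adj id (\<lambda>_. p)"
proof -
  obtain f where f: "hrel C adj id f" and m: "\<forall>h. hrel C adj id h \<longrightarrow> card (f ` C) \<le> card (h ` C)"
    using ex_has_least_nat[of "hrel C adj id" id "\<lambda>h. card (h ` C)"] by blast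
  interpret hmin C adj e mu f using f m by unfold_locales auto
  show ?thesis by (rule result)
qed


lemma (in gr) hrel_np2:
  assumes "hrel C adj f g" "cnt C adj f"
  shows "np2_homotopic C adj C adj f g"
  using assms(1)
proof (induction rule: rtranclp_induct)
  case base
  have "dcont (C \<times> {0..0}) (np2_adj adj int_adj) C adj (\<lambda>p. f (fst p))"
    using assms(2) rfl unfolding dcont_def np2_adj_def cnt_def by auto
  then show ?case unfolding np2_homotopic_def by (intro exI[of _ 0]) auto
next
  case (step b c)
  obtain m H where m: "0 \<le> m" and H: "dcont (C \<times> {0..m}) (np2_adj adj int_adj) C adj H"
    and H0: "\<forall>x\<in>C. H (x, 0) = f x" and Hm: "\<forall>x\<in>C. H (x, m) = b x"
    using step.IH unfolding np2_homotopic_def by blast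
  have sb: "stp C adj b c" by (rule step.hyps(2))
  have sc: "stp C adj c b" by (rule stp_sym[OF sb])
  define H' where "H' p = (if snd p \<le> m then H p else c (fst p))" for p
  have HC: "H (x, t) \<in> C" if "x \<in> C" "0 \<le> t" "t \<le> m" for x t
    using H that unfolding dcont_def by auto
  have Ha: "adj (H (x, t)) (H (x', t'))" if "x \<in> C" "x' \<in> C" "0 \<le> t" "t \<le> m" "0 \<le> t'" "t' \<le> m"
    "adj x x'" "\<bar>t - t'\<bar> \<le> 1" for x x' t t'
    using H that unfolding dcont_def np2_adj_def int_adj_def by auto
  have cC: "\<And>x. x \<in> C \<Longrightarrow> c x \<in> C" using sb by (auto simp: stp_def cnt_def)
  have "dcont (C \<times> {0..m+1}) (np2_adj adj int_adj) C adj H'"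
    unfolding dcont_def
  proof (intro conjI ballI impI)
    fix p assume p: "p \<in> C \<times> {0..m+1}"
    then show "H' p \<in> C" using HC cC by (cases p) (auto simp: H'_def)
  next
    fix p q assume p: "p \<in> C \<times> {0..m+1}" and q: "q \<in> C \<times> {0..m+1}"
      and pq: "np2_adj adj int_adj p q"
    obtain x t where pe: "p = (x, t)" by (cases p)
    obtain x' t' where qe: "q = (x', t')" by (cases q)
    have xs: "x \<in> C" "x' \<in> C" "0 \<le> t" "t \<le> m+1" "0 \<le> t'" "t' \<le> m+1" using p q pe qe by auto
    have axx: "adj x x'" using pq xs rfl unfolding pe qe np2_adj_def by auto
    have tt: "\<bar>t - t'\<bar> \<le> 1" using pq unfolding pe qe np2_adj_def int_adj_def by auto
    show "adj (H' p) (H' q)"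
    proof (cases "t \<le> m")
      case t: True
      show ?thesis
      proof (cases "t' \<le> m")
        case True then show ?thesis using t Ha xs axx tt by (simp add: pe qe H'_def)
      next
        case False
        then have "t = m" using t tt by linarith
        then have "H' p = b x" using Hm xs by (simp add: pe H'_def)
        moreover have "H' q = c x'" using False by (simp add: qe H'_def)
        ultimately show ?thesis using sb xs axx by (simp add: stp_def sadj_def)
      qed
    next
      case t: False
      show ?thesis
      proof (cases "t' \<le> m")
        case True
        then have "t' = m" using t tt by linarith
        then have "H' q = b x'" using Hm xs by (simp add: qe H'_def)
        moreover have "H' p = c x" using t by (simp add: pe H'_def)
        ultimately show ?thesis using sc xs axx by (simp add: stp_def sadj_def)
      next
        case False
        then show ?thesis using t sb xs axx by (simp add: pe qe H'_def stp_def cnt_def)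
      qed
    qed
  qed
  moreover have "\<forall>x\<in>C. H' (x, 0) = f x" using H0 m by (simp add: H'_def)
  moreover have "\<forall>x\<in>C. H' (x, m+1) = c x" by (simp add: H'_def)
  ultimately show ?case unfolding np2_homotopic_def using m
    by (intro exI[of _ "m+1"] exI[of _ H']) auto
qed

lemma (in gr) np2_hrel:
  assumes H: "dcont (X \<times> {0..m}) (np2_adj adj int_adj) X adj H" and CX: "C \<subseteq> X" and m: "0 \<le> m"
    and HC: "\<And>x t. x \<in> C \<Longrightarrow> 0 \<le> t \<Longrightarrow> t \<le> m \<Longrightarrow> H (x, t) \<in> C"
  shows "hrel C adj (\<lambda>x. H (x, 0)) (\<lambda>x. H (x, m))"
proof -
  define F where "F i = (\<lambda>x. H (x, int i))" for i
  have st: "stp C adj (F i) (F (Suc i))" if "i < nat m" for i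
  proof -
    have ad: "adj (H (x, t)) (H (x', t'))" if "x \<in> C" "x' \<in> C" "0 \<le> t" "t \<le> m" "0 \<le> t'" "t' \<le> m"
      "adj x x'" "\<bar>t - t'\<bar> \<le> 1" for x x' t t'
    proof -
      have "x \<in> X" "x' \<in> X" using CX that by auto
      then show ?thesis using H that unfolding dcont_def np2_adj_def int_adj_def by auto
    qed
    show ?thesis using that HC ad unfolding stp_def cnt_def sadj_def F_def by auto
  qed
  have "hrel C adj (F 0) (F n)" if "n \<le> nat m" for n
    using that
  proof (induction n)
    case 0 then show ?case by simp
  next
    case (Suc n)
    then show ?case using st[of n] by (auto intro: rtranclp.rtrancl_into_rtrancl)
  qed
  then have "hrel C adj (F 0) (F (nat m))" by simp
  then show ?thesis using m by (simp add: F_def)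
qed

theorem mainTheorem12:
  fixes X :: "(int ^ 'n) set" and adj :: "int ^ 'n \<Rightarrow> int ^ 'n \<Rightarrow> bool"
    and e :: "int ^ 'n" and \<mu> :: "(int ^ 'n) \<times> (int ^ 'n) \<Rightarrow> int ^ 'n"
  assumes "np2_H_space X adj e \<mu>"
  shows "np2_contractible (component X adj e) adj"
proof -
  have dI: "digital_image X adj" and eX: "e \<in> X"
    and md: "dcont (X \<times> X) (np2_adj adj adj) X adj \<mu>"
    and hl: "np2_homotopic X adj X adj (\<lambda>x. \<mu> (x, e)) id"
    and hr: "np2_homotopic X adj X adj (\<lambda>x. \<mu> (e, x)) id"
    using assms by (auto simp: np2_H_space_def)
  have finX: "finite X" and rflX: "\<And>x. x \<in> X \<Longrightarrow> adj x x"
    and symX: "\<And>x y. x \<in> X \<Longrightarrow> y \<in> X \<Longrightarrow> adj x y \<Longrightarrow> adj y x"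
    using dI by (auto simp: digital_image_def)
  define C where "C = component X adj e"
  define RX where "RX = (\<lambda>a b. a \<in> X \<and> b \<in> X \<and> adj a b)"
  have Cdef: "C = {y \<in> X. RX\<^sup>*\<^sup>* e y}" by (simp add: C_def RX_def component_def)
  have CX: "C \<subseteq> X" using Cdef by auto
  have eC: "e \<in> C" using Cdef eX by auto
  have clos: "z \<in> C" if "y \<in> C" "z \<in> X" "adj y z" for y z
  proof -
    have "RX\<^sup>*\<^sup>* e y" "RX y z" using that Cdef RX_def by auto
    then show ?thesis using Cdef that(2) by (auto intro: rtranclp.rtrancl_into_rtrancl)
  qed
  have lift: "F x \<in> C" if F1: "\<And>a. a \<in> X \<Longrightarrow> F a \<in> X"
    and F2: "\<And>a b. a \<in> X \<Longrightarrow> b \<in> X \<Longrightarrow> adj a b \<Longrightarrow> adj (F a) (F b)"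
    and Fe: "F e \<in> C" and x: "x \<in> C" for F x
  proof -
    have "RX\<^sup>*\<^sup>* e x" using x Cdef by auto
    then show ?thesis
    proof (induction rule: rtranclp_induct)
      case base show ?case by (rule Fe)
    next
      case (step a b)
      then have "a \<in> X" "b \<in> X" "adj a b" by (auto simp: RX_def)
      then show ?case using clos[OF step.IH] F1 F2 by blast
    qed
  qed
  have homC: "H (x, t) \<in> C" if H: "dcont (X \<times> {0..m}) (np2_adj adj int_adj) X adj H"
    and m: "0 \<le> m" and He: "H (e, m) = e" and x: "x \<in> C" and t: "0 \<le> t" "t \<le> m" for H m x t
  proof -
    have HX: "\<And>a s. a \<in> X \<Longrightarrow> 0 \<le> s \<Longrightarrow> s \<le> m \<Longrightarrow> H (a, s) \<in> X"
      using H unfolding dcont_def by auto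
    have Hd: "\<And>a b s s'. a \<in> X \<Longrightarrow> b \<in> X \<Longrightarrow> 0 \<le> s \<Longrightarrow> s \<le> m \<Longrightarrow> 0 \<le> s' \<Longrightarrow> s' \<le> m \<Longrightarrow>
        (a = b \<or> adj a b) \<Longrightarrow> \<bar>s - s'\<bar> \<le> 1 \<Longrightarrow> adj (H (a, s)) (H (b, s'))"
      using H unfolding dcont_def np2_adj_def int_adj_def by auto
    have eline: "H (e, m - int k) \<in> C" if "k \<le> nat m" for k
      using that
    proof (induction k)
      case 0 then show ?case using He eC by simp
    next
      case (Suc k)
      then have IH: "H (e, m - int k) \<in> C" by simp
      have "adj (H (e, m - int k)) (H (e, m - int (Suc k)))"
        using Suc.prems by (intro Hd eX) auto
      moreover have "H (e, m - int (Suc k)) \<in> X" using Suc.prems by (intro HX eX) auto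
      ultimately show ?case using clos[OF IH] by blast
    qed
    have Het: "H (e, t) \<in> C" using eline[of "nat (m - t)"] t by simp
    show ?thesis
      by (rule lift[where F = "\<lambda>a. H (a, t)", OF _ _ Het x]) (use HX Hd t in auto)
  qed
  obtain m1 H1 where m1: "0 \<le> m1" and H1: "dcont (X \<times> {0..m1}) (np2_adj adj int_adj) X adj H1"
    and H10: "\<forall>x\<in>X. H1 (x, 0) = \<mu> (x, e)" and H1m: "\<forall>x\<in>X. H1 (x, m1) = id x"
    using hl unfolding np2_homotopic_def by blast
  obtain m2 H2 where m2: "0 \<le> m2" and H2: "dcont (X \<times> {0..m2}) (np2_adj adj int_adj) X adj H2"
    and H20: "\<forall>x\<in>X. H2 (x, 0) = \<mu> (e, x)" and H2m: "\<forall>x\<in>X. H2 (x, m2) = id x"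
    using hr unfolding np2_homotopic_def by blast
  have muX: "\<And>x y. x \<in> X \<Longrightarrow> y \<in> X \<Longrightarrow> \<mu> (x, y) \<in> X" using md unfolding dcont_def by auto
  have muad: "\<And>x x' y y'. x \<in> X \<Longrightarrow> x' \<in> X \<Longrightarrow> y \<in> X \<Longrightarrow> y' \<in> X \<Longrightarrow>
        (x = x' \<or> adj x x') \<Longrightarrow> (y = y' \<or> adj y y') \<Longrightarrow> adj (\<mu> (x, y)) (\<mu> (x', y'))"
    using md unfolding dcont_def np2_adj_def by auto
  have H1C: "\<And>x t. x \<in> C \<Longrightarrow> 0 \<le> t \<Longrightarrow> t \<le> m1 \<Longrightarrow> H1 (x, t) \<in> C"
    using homC[OF H1 m1] H1m eX by simp
  have H2C: "\<And>x t. x \<in> C \<Longrightarrow> 0 \<le> t \<Longrightarrow> t \<le> m2 \<Longrightarrow> H2 (x, t) \<in> C"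
    using homC[OF H2 m2] H2m eX by simp
  have mee: "\<mu> (e, e) \<in> C" using H1C[OF eC, of 0] m1 H10 eX by simp
  have mey: "\<mu> (e, y) \<in> C" if "y \<in> C" for y
    by (rule lift[where F = "\<lambda>y. \<mu> (e, y)", OF _ _ mee that]) (use muX muad eX in auto)
  have muC: "\<mu> (x, y) \<in> C" if "x \<in> C" "y \<in> C" for x y
    by (rule lift[where F = "\<lambda>x. \<mu> (x, y)", OF _ _ mey[OF that(2)] that(1)])
       (use muX muad that(2) CX in auto)
  interpret g: gr C adj
    by unfold_locales (use rflX symX CX in auto)
  have cmu1: "cnt C adj (\<lambda>x. \<mu> (x, e))" using muC eC muad CX unfolding cnt_def by blast
  have cmu2: "cnt C adj (\<lambda>x. \<mu> (e, x))" using muC eC muad CX unfolding cnt_def by blast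
  have hl': "hrel C adj (\<lambda>x. \<mu> (x, e)) id"
  proof -
    have a: "hrel C adj (\<lambda>x. H1 (x, 0)) (\<lambda>x. H1 (x, m1))"
      by (rule g.np2_hrel[OF H1 CX m1 H1C])
    have b: "stp C adj (\<lambda>x. \<mu> (x, e)) (\<lambda>x. H1 (x, 0))"
      by (rule g.eq_stp[OF cmu1]) (use H10 CX in auto)
    have c: "stp C adj (\<lambda>x. H1 (x, m1)) id"
      by (rule g.stp_sym, rule g.eq_stp[OF g.cnt_id]) (use H1m CX in auto)
    show ?thesis using a b c
      by (meson converse_rtranclp_into_rtranclp rtranclp.rtrancl_into_rtrancl)
  qed
  have hr': "hrel C adj (\<lambda>x. \<mu> (e, x)) id"
  proof -
    have a: "hrel C adj (\<lambda>x. H2 (x, 0)) (\<lambda>x. H2 (x, m2))"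
      by (rule g.np2_hrel[OF H2 CX m2 H2C])
    have b: "stp C adj (\<lambda>x. \<mu> (e, x)) (\<lambda>x. H2 (x, 0))"
      by (rule g.eq_stp[OF cmu2]) (use H20 CX in auto)
    have c: "stp C adj (\<lambda>x. H2 (x, m2)) id"
      by (rule g.stp_sym, rule g.eq_stp[OF g.cnt_id]) (use H2m CX in auto)
    show ?thesis using a b c
      by (meson converse_rtranclp_into_rtranclp rtranclp.rtrancl_into_rtrancl)
  qed
  have conn: "(\<lambda>a b. a \<in> C \<and> b \<in> C \<and> adj a b)\<^sup>*\<^sup>* e y" if "y \<in> C" for y
  proof -
    have "RX\<^sup>*\<^sup>* e y" using that Cdef by auto
    then have "(\<lambda>a b. a \<in> C \<and> b \<in> C \<and> adj a b)\<^sup>*\<^sup>* e y \<and> y \<in> C"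
    proof (induction rule: rtranclp_induct)
      case base then show ?case using eC by simp
    next
      case (step a b)
      then have "b \<in> C" using clos by (auto simp: RX_def)
      then show ?case using step by (auto simp: RX_def intro: rtranclp.rtrancl_into_rtrancl)
    qed
    then show ?thesis by simp
  qed
  have finC: "finite C" using finX CX finite_subset by blast
  interpret h: hsp C adj e \<mu>
  proof unfold_locales
    fix x x' y y' assume "x \<in> C" "x' \<in> C" "y \<in> C" "y' \<in> C" "adj x x'" "adj y y'"
    then show "adj (\<mu> (x, y)) (\<mu> (x', y'))" using muad CX by blast
  qed (use finC eC conn muC hl' hr' in auto)
  obtain p where p: "p \<in> C" "hrel C adj id (\<lambda>_. p)" using h.contractible by blast
  have "np2_homotopic C adj C adj id (\<lambda>_. p)" by (rule g.hrel_np2[OF p(2) g.cnt_id])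
  then show ?thesis using p(1) unfolding np2_contractible_def C_def by blast
qed

end
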